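(* There exist constants $C>0$, $\delta_0\in(0,\tfrac18)$ and $\epsilon_0>0$ such that the following holds for all integers $n\ge2$ and $m\ge1$, every $\epsilon\in(0,\epsilon_0)$, and every forecasting competition mechanism $M$: if for every belief matrix $P\in[0,1]^{n\times m}$ and every ground truth $\vec\theta\in[0,1]^m$, with truthful reports $R=P$, the forecaster $i\sim M(P,\vec y)$ (with $\vec y\sim\vec\theta$) is $\epsilon$-optimal with probability at least $1-\delta_0$, then $m\ge\frac{C\ln n}{\epsilon^2}$. That is, the nonstrategic event complexity of every mechanism is $\Omega(\log(n)/\epsilon^2)$.
   Context: A forecasting competition mechanism is a map $M:[0,1]^{n\times m}\times\{0,1\}^m\to\Delta_n$ (reports and realized outcomes to a distribution over the $n$ forecasters). Events are independent with $\Pr[y_t=1]=\theta_t$. Accuracy of forecaster $i$ with beliefs $p_i$: $a_i=1-\frac1m\sum_t(p_{it}-\theta_t)^2$; $i$ is $\epsilon$-optimal if $a_i\ge\max_ja_j-\epsilon$. *)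

theory Defs
  imports "HOL-Probability.Probability"
begin

text \<open>A report / belief matrix is a function nat => nat => real (row i = forecaster, column t = event);
  outcomes are functions nat => bool; ground truths are functions nat => real.\<close>

definition belief_matrices :: "nat \<Rightarrow> nat \<Rightarrow> (nat \<Rightarrow> nat \<Rightarrow> real) set" where
  "belief_matrices n m = {P. (\<forall>i<n. \<forall>t<m. 0 \<le> P i t \<and> P i t \<le> 1) \<and>
                             (\<forall>i t. (n \<le> i \<or> m \<le> t) \<longrightarrow> P i t = 0)}"

definition ground_truths :: "nat \<Rightarrow> (nat \<Rightarrow> real) set" where
  "ground_truths m = {\<theta>. (\<forall>t<m. 0 \<le> \<theta> t \<and> \<theta> t \<le> 1) \<and> (\<forall>t. m \<le> t \<longrightarrow> \<theta> t = 0)}"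

definition is_mechanism ::
  "nat \<Rightarrow> ((nat \<Rightarrow> nat \<Rightarrow> real) \<Rightarrow> (nat \<Rightarrow> bool) \<Rightarrow> nat pmf) \<Rightarrow> bool" where
  "is_mechanism n M \<longleftrightarrow> (\<forall>R y. set_pmf (M R y) \<subseteq> {..<n})"

definition outcome_dist :: "nat \<Rightarrow> (nat \<Rightarrow> real) \<Rightarrow> (nat \<Rightarrow> bool) pmf" where
  "outcome_dist m \<theta> = Pi_pmf {..<m} False (\<lambda>t. bernoulli_pmf (\<theta> t))"

definition accuracy :: "nat \<Rightarrow> (nat \<Rightarrow> nat \<Rightarrow> real) \<Rightarrow> (nat \<Rightarrow> real) \<Rightarrow> nat \<Rightarrow> real" where
  "accuracy m P \<theta> i = 1 - (1 / real m) * (\<Sum>t<m. (P i t - \<theta> t)^2)"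

definition eps_optimal ::
  "nat \<Rightarrow> nat \<Rightarrow> (nat \<Rightarrow> nat \<Rightarrow> real) \<Rightarrow> (nat \<Rightarrow> real) \<Rightarrow> real \<Rightarrow> nat \<Rightarrow> bool" where
  "eps_optimal n m P \<theta> \<epsilon> i \<longleftrightarrow> i < n \<and>
     accuracy m P \<theta> i \<ge> (MAX j\<in>{..<n}. accuracy m P \<theta> j) - \<epsilon>"

definition success_prob ::
  "nat \<Rightarrow> nat \<Rightarrow> ((nat \<Rightarrow> nat \<Rightarrow> real) \<Rightarrow> (nat \<Rightarrow> bool) \<Rightarrow> nat pmf) \<Rightarrow>
   (nat \<Rightarrow> nat \<Rightarrow> real) \<Rightarrow> (nat \<Rightarrow> real) \<Rightarrow> real \<Rightarrow> real" where
  "success_prob n m M P \<theta> \<epsilon> =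
     measure_pmf.prob (bind_pmf (outcome_dist m \<theta>) (\<lambda>y. M P y)) {i. eps_optimal n m P \<theta> \<epsilon> i}"

end

theory Submission
  imports Defs
begin

lemma info_bound:
  fixes Y :: "'a set" and u :: "'a \<Rightarrow> real" and p :: "nat \<Rightarrow> 'a \<Rightarrow> real"
    and Q :: "'a \<Rightarrow> nat \<Rightarrow> real"
  assumes fin: "finite Y" and upos: "\<And>y. y \<in> Y \<Longrightarrow> u y > 0"
    and pnn: "\<And>k y. k < N \<Longrightarrow> y \<in> Y \<Longrightarrow> p k y \<ge> 0"
    and Qnn: "\<And>k y. k < N \<Longrightarrow> y \<in> Y \<Longrightarrow> Q y k \<ge> 0"
    and Qsum: "\<And>y. y \<in> Y \<Longrightarrow> (\<Sum>k<N. Q y k) \<le> 1"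
    and usum: "(\<Sum>y\<in>Y. u y) = 1"
    and chi: "\<And>k. k < N \<Longrightarrow> (\<Sum>y\<in>Y. (p k y)^2 / u y) \<le> R"
    and succ: "\<And>k. k < N \<Longrightarrow> c \<le> (\<Sum>y\<in>Y. p k y * Q y k)"
    and cpos: "c > 0" and Npos: "N > 0"
  shows "real N * c^2 \<le> R"
proof -
  define T where "T = real N * c / 2"
  have Tpos: "T > 0" using cpos Npos by (simp add: T_def)
  have Qle1: "Q y k \<le> 1" if "k < N" "y \<in> Y" for k y
  proof -
    have "Q y k \<le> (\<Sum>k<N. Q y k)"
      by (rule member_le_sum) (use that Qnn in auto)
    thus ?thesis using Qsum[OF that(2)] by linarith
  qed
  have pw: "p k y * Q y k \<le> T * u y * Q y k + (p k y)^2 / (4 * T * u y)"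
    if "k < N" "y \<in> Y" for k y
  proof -
    have u: "u y > 0" using upos that by auto
    have key: "(p k y - T * u y) * Q y k \<le> (p k y)^2 / (4 * T * u y)"
    proof (cases "p k y - T * u y \<le> 0")
      case True
      hence "(p k y - T * u y) * Q y k \<le> 0"
        using Qnn[OF that] by (simp add: mult_nonpos_nonneg)
      also have "0 \<le> (p k y)^2 / (4 * T * u y)" using Tpos u by simp
      finally show ?thesis .
    next
      case False
      have "(p k y - T * u y) * Q y k \<le> (p k y - T * u y)"
        using False Qle1[OF that] Qnn[OF that] by (simp add: mult_left_le)
      also have "\<dots> \<le> (p k y)^2 / (4 * T * u y)"
      proof -
        have "0 \<le> (p k y - 2 * T * u y)^2" by simp
        hence "4 * T * u y * (p k y - T * u y) \<le> (p k y)^2"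
          by (simp add: power2_eq_square algebra_simps)
        thus ?thesis using Tpos u by (simp add: pos_le_divide_eq mult.commute mult.left_commute)
      qed
      finally show ?thesis .
    qed
    thus ?thesis by (simp add: algebra_simps)
  qed
  have "real N * c = (\<Sum>k<N. c)" by simp
  also have "\<dots> \<le> (\<Sum>k<N. \<Sum>y\<in>Y. p k y * Q y k)"
    by (rule sum_mono) (use succ in auto)
  also have "\<dots> \<le> (\<Sum>k<N. \<Sum>y\<in>Y. T * u y * Q y k + (p k y)^2 / (4 * T * u y))"
    by (intro sum_mono pw) auto
  also have "\<dots> = (\<Sum>y\<in>Y. T * u y * (\<Sum>k<N. Q y k)) + (\<Sum>k<N. (\<Sum>y\<in>Y. (p k y)^2 / u y) / (4 * T))"
    by (simp add: sum.distrib sum_distrib_left sum_divide_distrib sum.swap[of _ "{..<N}"] mult.assoc mult_ac)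
  also have "\<dots> \<le> (\<Sum>y\<in>Y. T * u y) + (\<Sum>k<N. R / (4 * T))"
  proof (rule add_mono)
    show "(\<Sum>y\<in>Y. T * u y * (\<Sum>k<N. Q y k)) \<le> (\<Sum>y\<in>Y. T * u y)"
      by (rule sum_mono) (use Tpos upos Qsum in \<open>auto intro: mult_left_le\<close>)
    show "(\<Sum>k<N. (\<Sum>y\<in>Y. (p k y)^2 / u y) / (4 * T)) \<le> (\<Sum>k<N. R / (4 * T))"
      by (rule sum_mono) (use Tpos chi in \<open>auto intro: divide_right_mono\<close>)
  qed
  also have "\<dots> = T + real N * R / (4 * T)"
    by (simp add: sum_distrib_left[symmetric] usum)
  finally have "real N * c \<le> T + real N * R / (4 * T)" .
  hence "real N * c \<le> real N * c / 2 + R / (2 * c)"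
    using Npos cpos by (simp add: T_def)
  hence "real N * c / 2 \<le> R / (2 * c)" by simp
  thus ?thesis using cpos by (simp add: field_simps power2_eq_square)
qed

lemma binom_tail:
  assumes "d \<le> m"
  shows "(\<Sum>i\<le>d. m choose i) * 3^(m-d) \<le> (4::nat)^m"
proof -
  have "(\<Sum>i\<le>d. m choose i) * 3^(m-d) = (\<Sum>i\<le>d. (m choose i) * 3^(m-d))"
    by (simp add: sum_distrib_right)
  also have "\<dots> \<le> (\<Sum>i\<le>d. (m choose i) * 3^(m-i))"
    by (intro sum_mono mult_left_mono power_increasing) auto
  also have "\<dots> \<le> (\<Sum>i\<le>m. (m choose i) * 3^(m-i))"
    by (rule sum_mono2) (use assms in auto)
  also have "\<dots> = (1 + 3)^m"
    by (subst binomial_ring) simp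
  finally show ?thesis by simp
qed

lemma card_small_subsets:
  "card {D. D \<subseteq> {..<m} \<and> card D \<le> d} \<le> (\<Sum>i\<le>d. m choose i)"
proof -
  have "{D. D \<subseteq> {..<m} \<and> card D \<le> d} = (\<Union>i\<in>{..d}. {D. D \<subseteq> {..<m} \<and> card D = i})"
    by auto
  hence "card {D. D \<subseteq> {..<m} \<and> card D \<le> d} \<le> (\<Sum>i\<le>d. card {D. D \<subseteq> {..<m} \<and> card D = i})"
    using card_UN_le[of "{..d}" "\<lambda>i. {D. D \<subseteq> {..<m} \<and> card D = i}"] by simp
  also have "\<dots> = (\<Sum>i\<le>d. m choose i)"
    by (intro sum.cong refl) (simp add: n_subsets)
  finally show ?thesis .
qed

lemma powswap: "((a::nat)^m)^k = (a^k)^m"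
  by (simp only: power_mult[symmetric] mult.commute)

lemma pow_final:
  fixes x m d :: nat
  assumes h: "2^m * 3^(m-d) \<le> x * 4^m" and d: "4*d \<le> m"
  shows "27^m \<le> x^4 * 16^m"
proof -
  have A: "(2^m * 3^(m-d))^4 \<le> (x*4^m)^4" by (rule power_mono[OF h]) simp
  have p2: "((2::nat)^m)^4 = 16^m" by (subst powswap) simp
  have p4: "((4::nat)^m)^4 = 256^m" by (subst powswap) simp
  have p3: "((3::nat)^(m-d))^4 = 3^(4*(m-d))"
    by (simp only: power_mult[symmetric] mult.commute)
  have A2: "16^m * 3^(4*(m-d)) \<le> x^4 * 256^m"
    using A by (simp only: power_mult_distrib p2 p4 p3)
  have B: "(3::nat)^(3*m) \<le> 3^(4*(m-d))"
    by (rule power_increasing) (use d in auto)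
  have p27: "(3::nat)^(3*m) = 27^m" by (subst power_mult) simp
  have C: "16^m * 27^m \<le> x^4 * 256^m"
    using A2 B unfolding p27 by (meson le_trans mult_le_mono2)
  have p256: "(256::nat)^m = 16^m * 16^m"
    by (simp only: power_mult_distrib[symmetric]) simp
  have "16^m * 27^m \<le> 16^m * (x^4 * 16^m)"
    using C unfolding p256 by (simp only: mult.left_commute[of "16^m"])
  thus ?thesis by simp
qed
lemma gv:
  assumes m1: "m \<ge> 1"
  shows "\<exists>F. F \<subseteq> Pow {..<m} \<and> (\<forall>S\<in>F. \<forall>T\<in>F. S \<noteq> T \<longrightarrow> m < 4 * card ((S - T) \<union> (T - S)))
           \<and> 27^m \<le> (card F)^4 * (16::nat)^m"
proof -
  define good where "good F \<longleftrightarrow> F \<subseteq> Pow {..<m} \<and>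
      (\<forall>S\<in>F. \<forall>T\<in>F. S \<noteq> T \<longrightarrow> m < 4 * card ((S - T) \<union> (T - S)))" for F
  define Fams where "Fams = {F. good F}"
  have finF: "finite Fams"
    by (rule finite_subset[of _ "Pow (Pow {..<m})"]) (auto simp: Fams_def good_def)
  have neF: "{} \<in> Fams" by (simp add: Fams_def good_def)
  define mx where "mx = Max (card ` Fams)"
  have "mx \<in> card ` Fams" unfolding mx_def using finF neF by (intro Max_in) auto
  then obtain F where F: "F \<in> Fams" "card F = mx" by auto
  have maxF: "card G \<le> card F" if "G \<in> Fams" for G
    using F finF that by (simp add: mx_def)
  have gF: "good F" using F by (simp add: Fams_def)
  have finPF: "finite F" using gF unfolding good_def by (meson finite_Pow_iff finite_lessThan finite_subset)
  have cover: "\<exists>S\<in>F. 4 * card ((S - T) \<union> (T - S)) \<le> m" if T: "T \<subseteq> {..<m}" for T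
  proof (rule ccontr)
    assume "\<not> ?thesis"
    hence far: "\<forall>S\<in>F. m < 4 * card ((S - T) \<union> (T - S))" by auto
    hence TnF: "T \<notin> F" by fastforce
    have "good (insert T F)"
      using gF T far unfolding good_def by (auto simp: Un_commute)
    hence "card (insert T F) \<le> card F" using maxF by (simp add: Fams_def)
    thus False using TnF finPF by simp
  qed
  define d where "d = m div 4"
  define B where "B = {D. D \<subseteq> {..<m} \<and> card D \<le> d}"
  have "Pow {..<m} \<subseteq> (\<Union>S\<in>F. (\<lambda>D. (D - S) \<union> (S - D)) ` B)"
  proof
    fix T assume "T \<in> Pow {..<m}"
    hence T: "T \<subseteq> {..<m}" by auto
    then obtain S where S: "S \<in> F" "4 * card ((S - T) \<union> (T - S)) \<le> m" using cover by blast
    have Ssub: "S \<subseteq> {..<m}" using S gF by (auto simp: good_def)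
    define D where "D = (S - T) \<union> (T - S)"
    have "D \<in> B" unfolding B_def D_def d_def using S Ssub T by auto
    moreover have "T = (D - S) \<union> (S - D)" unfolding D_def by auto
    ultimately show "T \<in> (\<Union>S\<in>F. (\<lambda>D. (D - S) \<union> (S - D)) ` B)" using S by blast
  qed
  hence "card (Pow {..<m}) \<le> card (\<Union>S\<in>F. (\<lambda>D. (D - S) \<union> (S - D)) ` B)"
    by (intro card_mono) (auto intro!: finite_UN_I finPF finite_imageI simp: B_def)
  also have "\<dots> \<le> (\<Sum>S\<in>F. card ((\<lambda>D. (D - S) \<union> (S - D)) ` B))"
    by (rule card_UN_le[OF finPF])
  also have "\<dots> \<le> (\<Sum>S\<in>F. card B)"
    by (intro sum_mono card_image_le) (auto simp: B_def)
  also have "\<dots> = card F * card B" by simp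
  finally have c1: "2^m \<le> card F * card B" by (simp add: card_Pow)
  have c2: "card B * 3^(m-d) \<le> 4^m"
    using binom_tail[of d m] card_small_subsets[of m d] unfolding B_def d_def
    by (meson le_trans mult_le_mono1 div_le_dividend)
  have "2^m * 3^(m-d) \<le> card F * 4^m"
  proof -
    have "2^m * 3^(m-d) \<le> (card F * card B) * 3^(m-d)" using c1 by (rule mult_le_mono1)
    also have "\<dots> = card F * (card B * 3^(m-d))" by (simp only: mult.assoc)
    also have "\<dots> \<le> card F * 4^m" using c2 by (rule mult_le_mono2)
    finally show ?thesis .
  qed
  hence pf: "27^m \<le> (card F)^4 * (16::nat)^m"
    by (rule pow_final) (simp add: d_def)
  have g1: "F \<subseteq> Pow {..<m}" and g2: "\<forall>S\<in>F. \<forall>T\<in>F. S \<noteq> T \<longrightarrow> m < 4 * card ((S - T) \<union> (T - S))"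
    using gF unfolding good_def by auto
  show ?thesis by (rule exI[of _ F]) (intro conjI g1 g2 pf)
qed

lemma key:
  fixes n m N :: nat and c :: "nat \<Rightarrow> nat set" and \<epsilon> \<delta> :: real
    and M :: "(nat \<Rightarrow> nat \<Rightarrow> real) \<Rightarrow> (nat \<Rightarrow> bool) \<Rightarrow> nat pmf"
  assumes Nn: "N \<le> n" and N1: "1 \<le> N" and m1: "1 \<le> m"
    and e0: "0 < \<epsilon>" and e1: "\<epsilon> \<le> 1/4" and d1: "\<delta> < 1"
    and csub: "\<And>k. k < N \<Longrightarrow> c k \<subseteq> {..<m}"
    and cdist: "\<And>j k. j < N \<Longrightarrow> k < N \<Longrightarrow> j \<noteq> k \<Longrightarrow> m < 4 * card ((c j - c k) \<union> (c k - c j))"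
    and H: "\<forall>P\<in>belief_matrices n m. \<forall>\<theta>\<in>ground_truths m. success_prob n m M P \<theta> \<epsilon> \<ge> 1 - \<delta>"
  shows "real N * (1 - \<delta>)^2 \<le> exp (16 * \<epsilon>^2 * m)"
proof -
  define a where "a = 2 * \<epsilon>"
  have a0: "0 < a" and a1: "a \<le> 1/2" using e0 e1 by (auto simp: a_def)
  define g where "g i = (if i < N then i else 0)" for i :: nat
  have gN: "g i < N" for i using N1 by (simp add: g_def)
  define P where "P i t = (if i < n \<and> t < m \<and> t \<in> c (g i) then 1 else (0::real))" for i t
  define \<theta> where "\<theta> k t = (if t < m then (if t \<in> c k then 1/2 + a else 1/2 - a) else (0::real))" for k t
  define D where "D j k = (c j - c k) \<union> (c k - c j)" for j k
  have Pbm: "P \<in> belief_matrices n m"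
    by (auto simp: belief_matrices_def P_def)
  have \<theta>gt: "\<theta> k \<in> ground_truths m" for k
    using a0 a1 by (auto simp: ground_truths_def \<theta>_def)
  have Dsub: "D j k \<subseteq> {..<m}" if "j < N" "k < N" for j k
    using csub[OF that(1)] csub[OF that(2)] by (auto simp: D_def)
  have acc: "accuracy m P (\<theta> k) i = 1 - (1/2 - a)^2 - 2 * a * card (D (g i) k) / m"
    if "k < N" "i < n" for k i
  proof -
    have pt: "(P i t - \<theta> k t)^2 = (1/2 - a)^2 + 2 * a * (if t \<in> D (g i) k then 1 else 0)"
      if "t < m" for t
      using that \<open>i < n\<close> by (auto simp: P_def \<theta>_def D_def power2_eq_square algebra_simps)
    have "(\<Sum>t<m. (P i t - \<theta> k t)^2) = (\<Sum>t<m. (1/2 - a)^2 + 2 * a * (if t \<in> D (g i) k then 1 else 0))"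
      by (rule sum.cong) (auto simp: pt)
    also have "\<dots> = m * (1/2 - a)^2 + 2 * a * card (D (g i) k)"
    proof -
      have "(\<Sum>t<m. (if t \<in> D (g i) k then 1 else 0::real)) = card ({..<m} \<inter> D (g i) k)"
        by (simp add: sum.If_cases)
      also have "{..<m} \<inter> D (g i) k = D (g i) k" using Dsub[OF gN that(1)] by auto
      finally show ?thesis by (simp add: sum.distrib sum_distrib_left[symmetric])
    qed
    finally show ?thesis using m1 by (simp add: accuracy_def field_simps)
  qed
  have opt: "i < n \<and> g i = k" if "k < N" "eps_optimal n m P (\<theta> k) \<epsilon> i" for k i
  proof -
    have i: "i < n" and ge: "accuracy m P (\<theta> k) i \<ge> (MAX j\<in>{..<n}. accuracy m P (\<theta> k) j) - \<epsilon>"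
      using that(2) by (auto simp: eps_optimal_def)
    have kn: "k < n" using that(1) Nn by simp
    have "accuracy m P (\<theta> k) k \<le> (MAX j\<in>{..<n}. accuracy m P (\<theta> k) j)"
      by (rule Max_ge) (use kn in auto)
    hence "accuracy m P (\<theta> k) k - \<epsilon> \<le> accuracy m P (\<theta> k) i" using ge by linarith
    moreover have "g k = k" using that(1) by (simp add: g_def)
    moreover have "D k k = {}" by (simp add: D_def)
    ultimately have "2 * a * card (D (g i) k) / m \<le> \<epsilon>"
      using acc[OF that(1) i] acc[OF that(1) kn] by simp
    hence "4 * \<epsilon> * card (D (g i) k) \<le> \<epsilon> * m"
      using m1 by (simp add: a_def field_simps)
    hence "4 * card (D (g i) k) \<le> m" using e0
      by (metis (no_types, opaque_lifting) mult.assoc mult.commute mult_le_cancel_left_pos of_nat_le_iff of_nat_mult of_nat_numeral)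
    hence "g i = k" using cdist[OF gN that(1)] by (force simp: D_def)
    thus ?thesis using i by simp
  qed
  define Y where "Y = {y::nat\<Rightarrow>bool. \<forall>t. t \<notin> {..<m} \<longrightarrow> y t = False}"
  have finY: "finite Y"
  proof -
    have "Y = PiE_dflt {..<m} False (\<lambda>_. UNIV)" by (auto simp: Y_def PiE_dflt_def)
    thus ?thesis by auto
  qed
  have supp: "set_pmf (outcome_dist m th) \<subseteq> Y" for th
    unfolding outcome_dist_def Y_def by (rule set_Pi_pmf_subset) simp
  have th01: "0 \<le> \<theta> k t \<and> \<theta> k t \<le> 1" for k t using a0 a1 by (auto simp: \<theta>_def)
  define pp where "pp k y = pmf (outcome_dist m (\<theta> k)) y" for k y
  define u where "u y = pmf (outcome_dist m (\<lambda>_. 1/2)) y" for y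
  define G where "G k = {i. i \<in> {..<n} \<and> g i = k}" for k
  define Q where "Q y k = (\<Sum>i\<in>G k. pmf (M P y) i)" for y k
  have ppY: "pp k y = (\<Prod>t<m. pmf (bernoulli_pmf (\<theta> k t)) (y t))" if "y \<in> Y" for k y
    using that unfolding pp_def outcome_dist_def Y_def by (subst pmf_Pi') auto
  have uY: "u y = (1/2)^m" if "y \<in> Y" for y
    using that unfolding u_def outcome_dist_def Y_def by (subst pmf_Pi') auto
  have usum: "(\<Sum>y\<in>Y. u y) = 1"
    unfolding u_def by (rule sum_pmf_eq_1[OF finY supp])
  have Qnn: "Q y k \<ge> 0" for y k by (simp add: Q_def sum_nonneg)
  have Qsum: "(\<Sum>k<N. Q y k) \<le> 1" for y
  proof -
    have "(\<Sum>k<N. Q y k) = (\<Sum>i<n. pmf (M P y) i)"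
      unfolding Q_def G_def by (rule sum.group) (use gN in auto)
    also have "\<dots> = measure_pmf.prob (M P y) {..<n}"
      by (simp add: measure_measure_pmf_finite)
    also have "\<dots> \<le> 1" by simp
    finally show ?thesis .
  qed
  have succ: "1 - \<delta> \<le> (\<Sum>y\<in>Y. pp k y * Q y k)" if k: "k < N" for k
  proof -
    have "1 - \<delta> \<le> success_prob n m M P (\<theta> k) \<epsilon>" using H Pbm \<theta>gt by blast
    also have "\<dots> \<le> measure_pmf.prob (bind_pmf (outcome_dist m (\<theta> k)) (\<lambda>y. M P y)) (G k)"
      unfolding success_prob_def
      by (rule measure_pmf.finite_measure_mono) (use opt[OF k] in \<open>auto simp: G_def\<close>)
    also have "\<dots> = (\<Sum>i\<in>G k. pmf (bind_pmf (outcome_dist m (\<theta> k)) (\<lambda>y. M P y)) i)"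
      by (rule measure_measure_pmf_finite) (simp add: G_def)
    also have "\<dots> = (\<Sum>i\<in>G k. \<Sum>y\<in>Y. pmf (M P y) i * pp k y)"
      unfolding pmf_bind pp_def
      by (intro sum.cong refl integral_measure_pmf_real finY) (use supp in auto)
    also have "\<dots> = (\<Sum>y\<in>Y. pp k y * Q y k)"
      unfolding Q_def by (subst sum.swap) (simp add: sum_distrib_left mult.commute)
    finally show ?thesis .
  qed
  have chi: "(\<Sum>y\<in>Y. (pp k y)^2 / u y) = (1 + 4 * a^2)^m" for k
  proof -
    define F where "F y = (\<Prod>t<m. 2 * pmf (bernoulli_pmf (\<theta> k t)) (y t))" for y
    have pw: "(pp k y)^2 / u y = F y * pp k y" if "y \<in> Y" for y
    proof -
      have "F y = 2^m * pp k y" unfolding F_def ppY[OF that] by (simp add: prod.distrib)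
      moreover have "u y = 1 / 2^m" using uY[OF that] by (simp add: power_one_over)
      ultimately show ?thesis by (simp add: power2_eq_square)
    qed
    have "(\<Sum>y\<in>Y. (pp k y)^2 / u y) = (\<Sum>y\<in>Y. F y * pp k y)"
      by (rule sum.cong) (auto simp: pw)
    also have "\<dots> = measure_pmf.expectation (outcome_dist m (\<theta> k)) F"
      unfolding pp_def by (rule integral_measure_pmf_real[symmetric]) (use finY supp in auto)
    also have "\<dots> = (\<Prod>t<m. measure_pmf.expectation (bernoulli_pmf (\<theta> k t))
                        (\<lambda>b. 2 * pmf (bernoulli_pmf (\<theta> k t)) b))"
      unfolding outcome_dist_def F_def
      by (rule expectation_prod_Pi_pmf) (auto intro: integrable_measure_pmf_finite)
    also have "\<dots> = (\<Prod>t<m. 1 + 4 * a^2)"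
    proof (rule prod.cong[OF refl])
      fix t assume "t \<in> {..<m}"
      hence "\<theta> k t = 1/2 + a \<or> \<theta> k t = 1/2 - a" by (auto simp: \<theta>_def)
      thus "measure_pmf.expectation (bernoulli_pmf (\<theta> k t)) (\<lambda>b. 2 * pmf (bernoulli_pmf (\<theta> k t)) b)
            = 1 + 4 * a^2"
      proof -
        have "measure_pmf.expectation (bernoulli_pmf (\<theta> k t)) (\<lambda>b. 2 * pmf (bernoulli_pmf (\<theta> k t)) b)
            = 2 * \<theta> k t * \<theta> k t + 2 * (1 - \<theta> k t) * (1 - \<theta> k t)"
          using th01[of k t] by (subst integral_bernoulli_pmf) auto
        also have "\<dots> = 1 + 4 * a^2"
          using \<open>\<theta> k t = 1/2 + a \<or> \<theta> k t = 1/2 - a\<close>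
        proof
          assume h: "\<theta> k t = 1/2 + a" show ?thesis unfolding h by (simp add: power2_eq_square algebra_simps)
        next
          assume h: "\<theta> k t = 1/2 - a" show ?thesis unfolding h by (simp add: power2_eq_square algebra_simps)
        qed
        finally show ?thesis .
      qed
    qed
    also have "\<dots> = (1 + 4 * a^2)^m" by simp
    finally show ?thesis .
  qed
  have "real N * (1 - \<delta>)^2 \<le> (1 + 4 * a^2)^m"
  proof (rule info_bound[where Y=Y and u=u and p=pp and Q=Q])
    show "finite Y" by (rule finY)
    show "\<And>y. y \<in> Y \<Longrightarrow> 0 < u y" using uY by simp
    show "\<And>k y. k < N \<Longrightarrow> y \<in> Y \<Longrightarrow> 0 \<le> pp k y" by (simp add: pp_def)
    show "\<And>k y. k < N \<Longrightarrow> y \<in> Y \<Longrightarrow> 0 \<le> Q y k" by (rule Qnn)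
    show "\<And>y. y \<in> Y \<Longrightarrow> (\<Sum>k<N. Q y k) \<le> 1" by (rule Qsum)
    show "(\<Sum>y\<in>Y. u y) = 1" by (rule usum)
    show "\<And>k. k < N \<Longrightarrow> (\<Sum>y\<in>Y. (pp k y)^2 / u y) \<le> (1 + 4 * a^2)^m" using chi by simp
    show "\<And>k. k < N \<Longrightarrow> 1 - \<delta> \<le> (\<Sum>y\<in>Y. pp k y * Q y k)" by (rule succ)
    show "0 < 1 - \<delta>" using d1 by simp
    show "0 < N" using N1 by simp
  qed
  also have "\<dots> \<le> (exp (4 * a^2))^m"
    by (rule power_mono) (use exp_ge_add_one_self[of "4 * a^2"] in auto)
  also have "\<dots> = exp (16 * \<epsilon>^2 * m)"
    by (simp add: exp_of_nat_mult[symmetric] a_def power2_eq_square mult_ac)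
  finally show ?thesis .
qed

lemma ln_ge_1m: assumes "(x::real) > 0" shows "1 - 1/x \<le> ln x"
  using ln_le_minus_one[of "1/x"] assms by (simp add: ln_div)

theorem mainTheorem11:
  shows "\<exists>C::real. \<exists>\<delta>\<^sub>0::real. \<exists>\<epsilon>\<^sub>0::real. C > 0 \<and> 0 < \<delta>\<^sub>0 \<and> \<delta>\<^sub>0 < 1/8 \<and> \<epsilon>\<^sub>0 > 0 \<and>
    (\<forall>n m \<epsilon> M. 2 \<le> n \<longrightarrow> 1 \<le> m \<longrightarrow> 0 < \<epsilon> \<longrightarrow> \<epsilon> < \<epsilon>\<^sub>0 \<longrightarrow> is_mechanism n M \<longrightarrow>
      (\<forall>P\<in>belief_matrices n m. \<forall>\<theta>\<in>ground_truths m.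
          success_prob n m M P \<theta> \<epsilon> \<ge> 1 - \<delta>\<^sub>0) \<longrightarrow>
      real m \<ge> C * ln (real n) / \<epsilon>^2)"
proof (rule exI[of _ "1/20"], rule exI[of _ "1/100"], rule exI[of _ "1/20"], intro conjI allI impI)
  fix n m :: nat and \<epsilon> :: real and M :: "(nat \<Rightarrow> nat \<Rightarrow> real) \<Rightarrow> (nat \<Rightarrow> bool) \<Rightarrow> nat pmf"
  assume n2: "2 \<le> n" and m1: "1 \<le> m" and e0: "0 < \<epsilon>" and e1: "\<epsilon> < 1/20"
    and mech: "is_mechanism n M"
    and H: "\<forall>P\<in>belief_matrices n m. \<forall>\<theta>\<in>ground_truths m. success_prob n m M P \<theta> \<epsilon> \<ge> 1 - 1/100"
  from gv[OF m1] obtain F where Fall: "F \<subseteq> Pow {..<m} \<and>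
      (\<forall>S\<in>F. \<forall>T\<in>F. S \<noteq> T \<longrightarrow> m < 4 * card ((S - T) \<union> (T - S))) \<and>
      27^m \<le> (card F)^4 * (16::nat)^m" ..
  have Fsub: "F \<subseteq> Pow {..<m}" using Fall by (rule conjunct1)
  have Fdist: "\<forall>S\<in>F. \<forall>T\<in>F. S \<noteq> T \<longrightarrow> m < 4 * card ((S - T) \<union> (T - S))"
    using Fall by (rule conjunct2[THEN conjunct1])
  have Fbig: "27^m \<le> (card F)^4 * (16::nat)^m" using Fall by (rule conjunct2[THEN conjunct2])
  have finF: "finite F" using Fsub by (meson finite_Pow_iff finite_lessThan finite_subset)
  have cF2: "2 \<le> card F"
  proof (rule ccontr)
    assume "\<not> 2 \<le> card F"
    hence "card F \<le> 1" by simp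
    hence "(card F)^4 \<le> 1^4" by (rule power_mono) simp
    hence "(card F)^4 \<le> 1" by simp
    hence "(card F)^4 * (16::nat)^m \<le> 1 * 16^m" by (rule mult_le_mono1)
    with Fbig have "27^m \<le> 1 * (16::nat)^m" by (rule le_trans)
    hence "27^m \<le> (16::nat)^m" by (simp only: mult_1)
    moreover have "(16::nat)^m < 27^m" using m1 by (intro power_strict_mono) auto
    ultimately show False by simp
  qed
  define N where "N = min n (card F)"
  have N2: "2 \<le> N" using n2 cF2 by (simp add: N_def)
  have Nn: "N \<le> n" and NF: "N \<le> card F" by (auto simp: N_def)
  obtain F' where F': "F' \<subseteq> F" "card F' = N" "finite F'"
    using obtain_subset_with_card_n[OF NF] by blast
  obtain h where h: "bij_betw h {0..<N} F'"
    using ex_bij_betw_nat_finite[OF F'(3)] F'(2) by auto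
  have hF: "h k \<in> F" if "k < N" for k using bij_betwE[OF h] that F'(1) by auto
  have "real N * (1 - 1/100)^2 \<le> exp (16 * \<epsilon>^2 * m)"
  proof (rule key[where c=h and M=M])
    show "N \<le> n" by (rule Nn)
    show "1 \<le> N" using N2 by simp
    show "1 \<le> m" by (rule m1)
    show "0 < \<epsilon>" by (rule e0)
    show "\<epsilon> \<le> 1/4" using e1 by simp
    show "(1/100::real) < 1" by simp
    show "\<And>k. k < N \<Longrightarrow> h k \<subseteq> {..<m}" using hF Fsub by blast
    show "\<And>j k. j < N \<Longrightarrow> k < N \<Longrightarrow> j \<noteq> k \<Longrightarrow> m < 4 * card ((h j - h k) \<union> (h k - h j))"
    proof -
      fix j k assume "j < N" "k < N" "j \<noteq> k"
      hence "h j \<noteq> h k" using h by (auto simp: bij_betw_def inj_on_def)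
      thus "m < 4 * card ((h j - h k) \<union> (h k - h j))" using Fdist hF \<open>j < N\<close> \<open>k < N\<close> by blast
    qed
    show "\<forall>P\<in>belief_matrices n m. \<forall>\<theta>\<in>ground_truths m. success_prob n m M P \<theta> \<epsilon> \<ge> 1 - 1/100"
      by (rule H)
  qed
  hence "ln (real N * (99/100)^2) \<le> 16 * \<epsilon>^2 * m"
    using N2 by (subst ln_exp[symmetric]) (intro ln_mono; simp)
  hence l1: "ln (real N) + 2 * ln (99/100) \<le> 16 * \<epsilon>^2 * m"
    using N2 by (simp add: ln_mult ln_realpow)
  have "1 - 1/(99/100) \<le> ln (99/100::real)" by (rule ln_ge_1m) simp
  hence l2: "- 1/99 \<le> ln (99/100::real)" by simp
  have "1 - 1/2 \<le> ln (2::real)" by (rule ln_ge_1m) simp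
  moreover have "ln 2 \<le> ln (real N)" using N2 by simp
  ultimately have l3: "1/2 \<le> ln (real N)" by simp
  have lnN: "ln (real N) \<le> 20 * \<epsilon>^2 * m" using l1 l2 l3 by linarith
  show "1/20 * ln (real n) / \<epsilon>^2 \<le> real m"
  proof (cases "N = n")
    case True
    thus ?thesis using lnN e0 by (simp add: field_simps)
  next
    case False
    hence NcF: "N = card F" by (simp add: N_def min_def split: if_splits)
    have cFpos: "0 < real (card F)" using cF2 by simp
    have "real (27^m) \<le> real ((card F)^4 * 16^m)" using Fbig by (simp only: of_nat_le_iff)
    hence "(27::real)^m \<le> (real (card F))^4 * 16^m" by simp
    hence "ln ((27::real)^m) \<le> ln ((real (card F))^4 * 16^m)"
      by (rule ln_mono) simp
    hence "m * ln 27 \<le> 4 * ln (real (card F)) + m * ln 16"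
      using cFpos by (simp add: ln_mult ln_realpow)
    moreover have "ln 27 - ln 16 = ln (27/16::real)" by (simp add: ln_div)
    moreover have "1 - 1/(27/16) \<le> ln (27/16::real)" by (rule ln_ge_1m) simp
    ultimately have A: "m * ln 27 \<le> 4 * ln (real (card F)) + m * ln 16"
      and B: "11/27 \<le> ln 27 - ln (16::real)" by auto
    have "m * (11/27) \<le> m * (ln 27 - ln (16::real))"
      by (rule mult_left_mono[OF B]) simp
    hence "m * (11/27) \<le> 4 * ln (real (card F))" using A by (simp add: right_diff_distrib)
    hence "m * (11/27) \<le> 4 * (20 * \<epsilon>^2 * m)" using lnN NcF by simp
    moreover have "\<epsilon>^2 < (1/20)^2" using e0 e1 by (intro power_strict_mono) auto
    moreover have "real m > 0" using m1 by simp
    ultimately have X: "m * (11/27) \<le> 4 * (20 * \<epsilon>^2 * m)" and Y: "\<epsilon>^2 < (1/20)^2" and Z: "real m > 0"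
      by auto
    have "80 * \<epsilon>^2 < 11/27" using Y by (simp add: power2_eq_square)
    hence "80 * \<epsilon>^2 * m < 11/27 * m" using Z by (rule mult_strict_right_mono)
    moreover have "4 * (20 * \<epsilon>^2 * m) = 80 * \<epsilon>^2 * m" by simp
    ultimately have False using X by (simp add: mult.commute)
    thus ?thesis by blast
  qed
qed (auto)
end
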